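(* Let $R_s>0$ and $\lambda=2^{R_s}$. Let $\gamma_d,\gamma_e$ be independent random variables, where for $t\in\{d,e\}$, $\gamma_t$ follows the generalized-$K$ distribution with parameters $m_t>0$, $k_t>0$ and mean $\overline\gamma_t>0$, i.e. its CDF is $$F_{\gamma_t}(x)=\frac{1}{\Gamma(k_t)\Gamma(m_t)}\,G_{1,3}^{2,1}\!\left(\frac{k_t m_t x}{\overline\gamma_t}\,\middle|\,{1 \atop k_t,\,m_t,\,0}\right),\quad x\ge 0.$$ Let $\sigma_e^2$ denote the variance of $\gamma_e$, let $P(x)=F_{\gamma_d}(\lambda-1+\lambda x)$, and define the second-order approximation of the secrecy outage probability $P_{\rm sop}=\mathbb{E}\{F_{\gamma_d}(\lambda-1+\lambda\gamma_e)\}$ by $$\widetilde P_{\rm sop}:=P(\overline\gamma_e)+\frac{\sigma_e^2}{2}P''(\overline\gamma_e).$$ Then $$\widetilde P_{\rm sop}=\frac{G_{1,3}^{2,1}\!\left(\frac{k_d m_d(\lambda-1+\lambda\overline\gamma_e)}{\overline\gamma_d}\,\middle|\,{1\atop k_d,\,m_d,\,0}\right)}{\Gamma(k_d)\Gamma(m_d)}+\overline\gamma_e^2\lambda^2\,\frac{\left(\frac{(k_e+1)(m_e+1)}{k_em_e}-1\right)G_{2,4}^{2,2}\!\left(\frac{k_dm_d(\lambda-1+\lambda\overline\gamma_e)}{\overline\gamma_d}\,\middle|\,{0,\,1\atop k_d,\,m_d,\,0,\,2}\right)}{2\Gamma(k_d)\Gamma(m_d)(\lambda-1+\lambda\overl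ine\gamma_e)^2}.$$
   Context: $G^{m,n}_{p,q}\left(z\,\middle|\,{a_1,\dots,a_p\atop b_1,\dots,b_q}\right)$ denotes the standard Meijer G-function with upper parameters $a_i$ and lower parameters $b_j$; $\Gamma$ is the Gamma function. The generalized-$K$ distribution with parameters $k,m$ and mean $\overline\gamma$ is that of $\overline\gamma XY$ with $X,Y$ independent Gamma variables of shapes $k$ and $m$ and unit means. $P''$ denotes the second derivative of $P$. *)

theory Defs
  imports "HOL-Probability.Probability"
begin

text \<open>Meijer G-function G^{m,n}_{p,q}(z | a; b) for real parameters a (length p), b (length q)
  and real z > 0, defined by the Mellin--Barnes integral
  (1/(2 pi i)) * integral over L of
     prod_{j<m} Gamma(b_j - s) * prod_{j<n} Gamma(1 - a_j + s)
   / (prod_{m<=j<q} Gamma(1 - b_j + s) * prod_{n<=j<p} Gamma(a_j - s)) * z^s ds,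
  where L is the vertical line Re s = c separating the poles of the Gamma(b_j - s), j<m,
  from those of the Gamma(1 - a_j + s), j<n.  We take c to be the midpoint between
  max_{j<n} (a_j - 1) and min_{j<m} b_j (this is the standard vertical-line contour,
  which is valid whenever that max is below that min; the value does not depend on the
  choice of c in that strip).  With s = c + i t, ds = i dt.\<close>

definition meijer_contour :: "nat \<Rightarrow> nat \<Rightarrow> real list \<Rightarrow> real list \<Rightarrow> real" where
  "meijer_contour m n a b =
     (let lo = (if n = 0 then None else Some (Max ((\<lambda>j. a ! j - 1) ` {..<n})));
          hi = (if m = 0 then None else Some (Min ((\<lambda>j. b ! j) ` {..<m})))
      in case (lo, hi) of
           (Some l, Some h) \<Rightarrow> (l + h) / 2
         | (Some l, None) \<Rightarrow> l + 1
         | (None, Some h) \<Rightarrow> h - 1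
         | (None, None) \<Rightarrow> 0)"

definition meijer_integrand ::
  "nat \<Rightarrow> nat \<Rightarrow> real list \<Rightarrow> real list \<Rightarrow> real \<Rightarrow> complex \<Rightarrow> complex" where
  "meijer_integrand m n a b z s =
     (\<Prod>j<m. Gamma (complex_of_real (b ! j) - s)) *
     (\<Prod>j<n. Gamma (1 - complex_of_real (a ! j) + s)) *
     (\<Prod>j\<in>{m..<length b}. rGamma (1 - complex_of_real (b ! j) + s)) *
     (\<Prod>j\<in>{n..<length a}. rGamma (complex_of_real (a ! j) - s)) *
     (complex_of_real z) powr s"

definition meijerG :: "nat \<Rightarrow> nat \<Rightarrow> real list \<Rightarrow> real list \<Rightarrow> real \<Rightarrow> real" where
  "meijerG m n a b z =
     Re ((LINT t|lborel. meijer_integrand m n a b z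
            (Complex (meijer_contour m n a b) t)) / complex_of_real (2 * pi))"

text \<open>Gamma density with shape k and unit mean (rate k).\<close>
definition gamma_density :: "real \<Rightarrow> real \<Rightarrow> real" where
  "gamma_density k x =
     (if 0 < x then k powr k * x powr (k - 1) * exp (- k * x) / Gamma k else 0)"

definition genK_cdf :: "real \<Rightarrow> real \<Rightarrow> real \<Rightarrow> real \<Rightarrow> real" where
  "genK_cdf k m gbar x =
     meijerG 2 1 [1] [k, m, 0] (k * m * x / gbar) / (Gamma k * Gamma m)"

end

theory Submission
  imports Defs "HOL-Probability.Sinc_Integral"
begin

lemma integrable_inv_sq: "integrable lborel (\<lambda>x::real. inverse (1 + x^2))"
  using integrable_inverse_1_plus_square by (simp add: set_integrable_def einterval_def)

lemma powr_pos_exp: "y > 0 \<Longrightarrow> (complex_of_real y) powr z = exp (z * of_real (ln y))"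
  by (simp add: powr_def Ln_of_real)

lemma norm_powr_pos: "y > 0 \<Longrightarrow> norm ((complex_of_real y) powr z) = y powr Re z"
  by (simp add: norm_powr_real_powr)

lemma norm_Complex_le: "norm (Complex c t) \<le> (\<bar>c\<bar> + 1) * (1 + t^2)"
proof -
  have "norm (Complex c t) \<le> \<bar>c\<bar> + \<bar>t\<bar>"
    using cmod_le[of "Complex c t"] by simp
  also have "\<bar>t\<bar> \<le> 1 + t^2"
    using zero_le_power2[of "\<bar>t\<bar> - 1"] unfolding power2_diff power2_abs by simp
  hence "\<bar>c\<bar> + \<bar>t\<bar> \<le> (\<bar>c\<bar> + 1) * (1 + t^2)"
    by (simp add: algebra_simps) (use mult_nonneg_nonneg[OF abs_ge_zero[of c] zero_le_power2[of t]] in linarith)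
  finally show ?thesis .
qed

lemma cont_powr_exp: "y > 0 \<Longrightarrow> continuous_on UNIV (\<lambda>t. (complex_of_real y) powr (Complex c t - a))"
  by (simp add: powr_pos_exp Complex_eq) (intro continuous_intros)

lemma cont_Complex: "continuous_on UNIV (\<lambda>t. Complex c t)"
  by (simp add: Complex_eq) (intro continuous_intros)

lemma powr_le_K: fixes u x c K :: real assumes "u \<in> {x/2..2*x}" "u > 0" "x > 0" and K_def: "K = (x/2) powr (c-1) + (2*x) powr (c-1)"
  shows "u powr (c - 1) \<le> K"
    proof (cases "c - 1 \<ge> 0")
      case True
      hence "u powr (c-1) \<le> (2*x) powr (c-1)" using assms by (intro powr_mono2) auto
      thus ?thesis unfolding K_def using powr_ge_zero[of "x/2" "c-1"] by linarith
    next
      case False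
      hence "u powr (c-1) \<le> (x/2) powr (c-1)" using assms by (intro powr_mono2') auto
      thus ?thesis unfolding K_def using powr_ge_zero[of "2*x" "c-1"] by linarith
    qed

lemma powr_quot_bound:
  fixes x y c t :: real
  assumes x: "x > 0" and y: "y \<in> {x/2..2*x}"
  shows "norm ((complex_of_real y) powr (Complex c t) - (complex_of_real x) powr (Complex c t))
     \<le> norm (Complex c t) * ((x/2) powr (c-1) + (2*x) powr (c-1)) * \<bar>y - x\<bar>"
proof -
  define S where "S = complex_of_real ` {x/2..2*x}"
  define w where "w = Complex c t"
  define K where "K = (x/2) powr (c-1) + (2*x) powr (c-1)"
  have cvx: "convex S" unfolding S_def
    by (intro convex_linear_image) (auto simp: linear_of_real)
  have yS: "complex_of_real y \<in> S" unfolding S_def using y by (rule imageI)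
  have xS: "complex_of_real x \<in> S" unfolding S_def using x by (intro imageI) simp
  have main: "norm ((complex_of_real y) powr w - (complex_of_real x) powr w) \<le> (norm w * K) * norm (complex_of_real y - complex_of_real x)"
  proof (rule field_differentiable_bound[OF cvx _ _ yS xS])
    fix z assume "z \<in> S"
    then obtain u where u: "u \<in> {x/2..2*x}" "z = of_real u" by (auto simp: S_def)
    hence "u > 0" using x by auto
    hence zn: "z \<notin> \<real>\<^sub>\<le>\<^sub>0" using u by (auto simp: nonpos_Reals_def)
    show "((\<lambda>z. z powr w) has_field_derivative (w * z powr (w - 1))) (at z within S)"
      using has_field_derivative_powr[OF zn] by (rule has_field_derivative_at_within)
    have "norm (w * z powr (w - 1)) = norm w * u powr (c - 1)"
      unfolding u(2) norm_mult by (subst norm_powr_pos[OF \<open>u > 0\<close>]) (simp add: w_def)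
    also have "u powr (c - 1) \<le> K" by (rule powr_le_K[OF u(1) \<open>u>0\<close> x K_def])
    hence "norm w * u powr (c - 1) \<le> norm w * K" by (intro mult_left_mono) auto
    finally show "norm (w * z powr (w - 1)) \<le> norm w * K" .

  qed
  have nd: "norm (complex_of_real y - complex_of_real x) = \<bar>y - x\<bar>"
    by (metis norm_of_real of_real_diff)
  show ?thesis using main unfolding nd w_def K_def .
qed

lemma Complex_minus_1: "Complex c t - 1 = Complex (c - 1) t"
  by (simp add: complex_eq_iff)

lemma aux_frac: "(a::real) > 0 \<Longrightarrow> B / a^2 * (C * a * K) = B * C * K * inverse a"
  by (simp add: power2_eq_square field_simps)

lemma deriv_mellin:
  fixes g :: "real \<Rightarrow> complex" and c B x :: real
  assumes gc: "continuous_on UNIV g" and gb: "\<And>t. norm (g t) \<le> B / (1 + t^2)^2" and x: "x > 0"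
  shows "((\<lambda>y. Re (LINT t|lborel. g t * of_real y powr Complex c t)) has_real_derivative
          Re (LINT t|lborel. g t * Complex c t * of_real x powr Complex (c-1) t)) (at x)"
proof -
  define F where "F y = (LINT t|lborel. g t * of_real y powr Complex c t)" for y
  define f where "f t = g t * (Complex c t * of_real x powr (Complex c t - 1))" for t
  define D where "D = (LINT t|lborel. f t)"
  define K where "K = (x/2) powr (c-1) + (2*x) powr (c-1)"
  have K0: "K \<ge> 0" unfolding K_def by simp
  have B0: "B \<ge> 0" using order_trans[OF norm_ge_zero gb[of 0]] by simp
  have sq: "1 / (1 + t^2)^2 \<le> inverse (1 + t^2)" for t :: real
  proof -
    have "1 \<le> 1 + t^2" by simp
    hence "(1 + t^2) * 1 \<le> (1 + t^2) * (1 + t^2)" by (intro mult_left_mono) auto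
    hence "1 + t^2 \<le> (1 + t^2)^2" by (simp add: power2_eq_square[of "1 + t^2"])
    moreover have p: "0 < 1 + t^2" by (simp add: add_pos_nonneg)
    ultimately show ?thesis using divide_left_mono[of "1 + t^2" "(1+t^2)^2" 1] by (simp add: inverse_eq_divide)
  qed
  have gb': "norm (g t) \<le> B * inverse (1 + t^2)" for t
    using gb[of t] mult_left_mono[OF sq[of t] B0] by simp
  have meas: "(\<lambda>t. g t * of_real y powr (Complex c t - a)) \<in> borel_measurable lborel" if "y > 0" for y a
    using that by (auto intro!: borel_measurable_continuous_onI continuous_intros gc cont_powr_exp)
  have int: "integrable lborel (\<lambda>t. g t * of_real y powr Complex c t)" if y: "y > 0" for y
  proof (rule Bochner_Integration.integrable_bound)
    show "integrable lborel (\<lambda>t. (B * y powr c) * inverse (1 + t^2))"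
      using integrable_inv_sq by (rule integrable_mult_right)
    show "(\<lambda>t. g t * of_real y powr Complex c t) \<in> borel_measurable lborel"
      using meas[OF y, of 0] by simp
    show "AE t in lborel. norm (g t * of_real y powr Complex c t) \<le> norm ((B * y powr c) * inverse (1 + t^2))"
    proof (intro AE_I2)
      fix t
      have "norm (g t * of_real y powr Complex c t) = norm (g t) * y powr c"
        using y by (simp add: norm_mult norm_powr_pos)
      also have "\<dots> \<le> B * inverse (1 + t^2) * y powr c"
        using gb'[of t] by (intro mult_right_mono) auto
      finally show "norm (g t * of_real y powr Complex c t) \<le> norm ((B * y powr c) * inverse (1 + t^2))"
        using B0 by (simp add: abs_mult mult_ac)
    qed
  qed
  have lim: "((\<lambda>y. (F y - F x) / of_real (y - x)) \<longlongrightarrow> D) (at x)"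
    unfolding tendsto_at_iff_sequentially
  proof (intro allI impI)
    fix X :: "nat \<Rightarrow> real" assume X: "\<forall>i. X i \<in> UNIV - {x}" "X \<longlonglongrightarrow> x"
    have "\<forall>\<^sub>F n in sequentially. dist (X n) x < x/2"
      using X(2) x unfolding tendsto_iff by (meson half_gt_zero)
    then obtain N where N0: "\<And>n. n \<ge> N \<Longrightarrow> dist (X n) x < x/2"
      by (auto simp: eventually_sequentially)
    have N: "X (i + N) \<in> {x/2..2*x}" for i
      using N0[of "i+N"] by (auto simp: dist_real_def abs_if split: if_splits)
    have Xne: "X (i + N) \<noteq> x" for i using X(1) by auto
    define s where "s i t = g t * ((of_real (X (i+N)) powr Complex c t - of_real x powr Complex c t)
                       / of_real (X (i+N) - x))" for i t
    have conv: "(\<lambda>i. LINT t|lborel. s i t) \<longlonglongrightarrow> D"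
      unfolding D_def
    proof (rule integral_dominated_convergence[where w="\<lambda>t. B * (\<bar>c\<bar> + 1) * K * inverse (1 + t^2)"])
      show "f \<in> borel_measurable lborel" unfolding f_def
        using x by (auto intro!: borel_measurable_continuous_onI continuous_intros gc cont_powr_exp cont_Complex)
      show "s i \<in> borel_measurable lborel" for i
      proof -
        have "X (i + N) > 0" using N[of i] x by auto
        thus ?thesis unfolding s_def
          using x Xne[of i] by (auto intro!: borel_measurable_continuous_onI continuous_intros gc cont_powr_exp[where a=0, simplified])
      qed
      show "integrable lborel (\<lambda>t. B * (\<bar>c\<bar> + 1) * K * inverse (1 + t^2))"
        using integrable_inv_sq by (rule integrable_mult_right)
      show "AE t in lborel. (\<lambda>i. s i t) \<longlonglongrightarrow> f t"
      proof (intro AE_I2)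
        fix t
        define w where "w = Complex c t"
        have xn: "complex_of_real x \<notin> \<real>\<^sub>\<le>\<^sub>0" using x by (auto simp: nonpos_Reals_def)
        have "((\<lambda>z. (z powr w - of_real x powr w) / (z - of_real x)) \<longlongrightarrow> w * of_real x powr (w - 1)) (at (of_real x))"
          using has_field_derivative_powr[OF xn, of w] unfolding has_field_derivative_iff .
        hence "((\<lambda>z. (z powr w - of_real x powr w) / (z - of_real x)) \<circ> (\<lambda>i. complex_of_real (X (i+N)))) \<longlonglongrightarrow> w * of_real x powr (w - 1)"
          unfolding tendsto_at_iff_sequentially
        proof (elim allE impE)
          show "\<forall>i. complex_of_real (X (i + N)) \<in> UNIV - {complex_of_real x}" using Xne by auto
          have "(\<lambda>i. X (i + N)) \<longlonglongrightarrow> x" using X(2) by (rule LIMSEQ_ignore_initial_segment)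
          thus "(\<lambda>i. complex_of_real (X (i + N))) \<longlonglongrightarrow> complex_of_real x"
            by (intro tendsto_intros)
        qed
        hence "(\<lambda>i. g t * (((\<lambda>z. (z powr w - of_real x powr w) / (z - of_real x)) \<circ> (\<lambda>i. complex_of_real (X (i+N)))) i))
                 \<longlonglongrightarrow> g t * (w * of_real x powr (w - 1))"
          by (intro tendsto_intros)
        thus "(\<lambda>i. s i t) \<longlonglongrightarrow> f t"
          unfolding s_def f_def w_def by (simp add: o_def)
      qed
      show "AE t in lborel. norm (s i t) \<le> B * (\<bar>c\<bar> + 1) * K * inverse (1 + t^2)" for i
      proof (intro AE_I2)
        fix t
        have "norm (s i t) = norm (g t) * (norm (of_real (X (i+N)) powr Complex c t - of_real x powr Complex c t) / \<bar>X (i+N) - x\<bar>)"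
          unfolding s_def norm_mult norm_divide by (simp del: of_real_diff add: of_real_diff[symmetric] norm_of_real)
        also have "norm (of_real (X (i+N)) powr Complex c t - of_real x powr Complex c t) / \<bar>X (i+N) - x\<bar>
                   \<le> norm (Complex c t) * K"
          using powr_quot_bound[OF x N[of i], of c t] Xne[of i] unfolding K_def
          by (simp add: divide_simps)
        also have "norm (Complex c t) * K \<le> (\<bar>c\<bar> + 1) * (1 + t^2) * K"
          using norm_Complex_le[of c t] K0 by (intro mult_right_mono) auto
        finally have "norm (s i t) \<le> norm (g t) * ((\<bar>c\<bar> + 1) * (1 + t^2) * K)"
          by (simp add: mult_left_mono)
        also have "\<dots> \<le> B / (1 + t^2)^2 * ((\<bar>c\<bar> + 1) * (1 + t^2) * K)"
          using gb[of t] K0 by (intro mult_right_mono) auto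
        also have "\<dots> = B * (\<bar>c\<bar> + 1) * K * inverse (1 + t^2)"
          using aux_frac[of "1 + t^2" B "\<bar>c\<bar> + 1" K] by (simp add: add_pos_nonneg mult_ac)
        finally show "norm (s i t) \<le> B * (\<bar>c\<bar> + 1) * K * inverse (1 + t^2)" .
      qed
    qed
    have eq: "(LINT t|lborel. s i t) = (F (X (i+N)) - F x) / of_real (X (i+N) - x)" for i
    proof -
      have "X (i + N) > 0" using N[of i] x by auto
      have "(LINT t|lborel. s i t) = (LINT t|lborel. (g t * of_real (X (i+N)) powr Complex c t - g t * of_real x powr Complex c t) / of_real (X (i+N) - x))"
        unfolding s_def by (intro Bochner_Integration.integral_cong) (auto simp: algebra_simps diff_divide_distrib)
      also have "\<dots> = (LINT t|lborel. (g t * of_real (X (i+N)) powr Complex c t - g t * of_real x powr Complex c t)) / of_real (X (i+N) - x)"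
        by (rule integral_divide_zero)
      also have "\<dots> = (F (X (i+N)) - F x) / of_real (X (i+N) - x)"
        unfolding F_def using int[OF \<open>X (i+N) > 0\<close>] int[OF x] by (subst Bochner_Integration.integral_diff) auto
      finally show ?thesis .
    qed
    have "(\<lambda>i. (F (X (i+N)) - F x) / of_real (X (i+N) - x)) \<longlonglongrightarrow> D"
      using conv unfolding eq .
    hence "(\<lambda>i. ((\<lambda>y. (F y - F x) / of_real (y - x)) \<circ> X) (i + N)) \<longlonglongrightarrow> D" by (simp add: o_def)
    thus "((\<lambda>y. (F y - F x) / of_real (y - x)) \<circ> X) \<longlonglongrightarrow> D"
      by (rule LIMSEQ_offset)
  qed
  hence "((\<lambda>y. Re ((F y - F x) / of_real (y - x))) \<longlongrightarrow> Re D) (at x)"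
    by (rule tendsto_Re)
  hence "((\<lambda>y. (Re (F y) - Re (F x)) / (y - x)) \<longlongrightarrow> Re D) (at x)"
    by (simp add: Re_divide_of_real)
  hence "((\<lambda>y. Re (F y)) has_real_derivative Re D) (at x)"
    unfolding has_field_derivative_iff .
  moreover have "D = (LINT t|lborel. g t * Complex c t * of_real x powr Complex (c-1) t)"
    unfolding D_def f_def
    by (intro Bochner_Integration.integral_cong) (auto simp: mult_ac Complex_minus_1)
  ultimately show ?thesis unfolding F_def by simp
qed

lemma Re_pos_not_nonpos_Int: "Re (z::complex) > 0 \<Longrightarrow> z \<notin> \<int>\<^sub>\<le>\<^sub>0"
  by (auto elim!: nonpos_Ints_cases)

lemma norm_Gamma_le:
  fixes z :: complex assumes z: "Re z > 0"
  shows "norm (Gamma z) \<le> Gamma (Re z)"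
proof -
  have le: "norm (Gamma_series z n) \<le> Gamma_series (Re z) n" for n
  proof -
    have pz: "pochhammer (Re z) (n+1) \<le> norm (pochhammer z (n+1))"
      unfolding pochhammer_prod prod_norm[symmetric]
    proof (rule prod_mono)
      fix i assume "i \<in> {0..<n+1}"
      have "Re z + of_nat i = Re (z + of_nat i)" by simp
      also have "\<dots> \<le> norm (z + of_nat i)" by (rule complex_Re_le_cmod)
      finally show "0 \<le> Re z + of_nat i \<and> Re z + of_nat i \<le> norm (z + of_nat i)"
        using z by simp
    qed
    have ppos: "pochhammer (Re z) (n+1) > 0" using z by (intro pochhammer_pos)
    have e: "norm (exp (z * of_real (ln (of_nat n)))) = exp (Re z * ln (of_nat n))"
      by (simp add: norm_exp_eq_Re)
    have "norm (Gamma_series z n) = fact n * exp (Re z * ln (of_nat n)) / norm (pochhammer z (n+1))"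
      unfolding Gamma_series_def norm_divide norm_mult e by (simp add: norm_fact)
    also have "\<dots> \<le> fact n * exp (Re z * ln (of_nat n)) / pochhammer (Re z) (n+1)"
      using pz ppos by (intro divide_left_mono mult_pos_pos) auto
    also have "\<dots> = Gamma_series (Re z) n" unfolding Gamma_series_def by simp
    finally show ?thesis .
  qed
  show ?thesis
    by (rule LIMSEQ_le[OF tendsto_norm[OF Gamma_series_LIMSEQ] Gamma_series_LIMSEQ]) (use le in auto)
qed

lemma norm_le_norm_plus_nat:
  fixes z :: complex assumes z: "Re z \<ge> 0"
  shows "norm z \<le> norm (z + of_nat i)"
proof -
  have "(Re z)^2 \<le> (Re z + of_nat i)^2" using z by (intro power_mono) auto
  hence "norm z ^ 2 \<le> norm (z + of_nat i) ^ 2" by (simp add: cmod_power2)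
  thus ?thesis by (rule power2_le_imp_le) simp
qed

lemma norm_Gamma_poly:
  fixes z :: complex assumes z: "Re z > 0"
  shows "norm (Gamma z) * norm z ^ N \<le> Gamma (Re z + of_nat N)"
proof -
  have nz: "z \<notin> \<int>\<^sub>\<le>\<^sub>0" using z by (rule Re_pos_not_nonpos_Int)
  have G: "Gamma (z + of_nat N) = pochhammer z N * Gamma z"
    using pochhammer_Gamma[OF nz, of N] Gamma_nonzero[OF nz] by (simp add: field_simps)
  have "norm z ^ N = (\<Prod>i\<in>{0..<N}. norm z)" by simp
  also have "\<dots> \<le> (\<Prod>i\<in>{0..<N}. norm (z + of_nat i))"
    by (rule prod_mono) (use z norm_le_norm_plus_nat in auto)
  also have "\<dots> = norm (pochhammer z N)" by (simp add: pochhammer_prod prod_norm)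
  finally have "norm (Gamma z) * norm z ^ N \<le> norm (Gamma z) * norm (pochhammer z N)"
    by (intro mult_left_mono) auto
  also have "\<dots> = norm (Gamma (z + of_nat N))" by (simp add: G norm_mult)
  also have "\<dots> \<le> Gamma (Re (z + of_nat N))" using z by (intro norm_Gamma_le) simp
  finally show ?thesis by simp
qed

lemma Gamma_decay:
  fixes z :: complex assumes z: "Re z > 0"
  shows "norm (Gamma z) \<le> Gamma (Re z + 6) / (min ((Re z)^2) 1)^3 / (1 + (Im z)^2)^3"
proof -
  define m where "m = min ((Re z)^2) 1"
  have m0: "m > 0" using z by (simp add: m_def)
  have m1: "m \<le> 1" "m \<le> (Re z)^2" by (auto simp: m_def)
  have "m * (1 + (Im z)^2) = m + m * (Im z)^2" by (simp add: algebra_simps)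
  also have "\<dots> \<le> (Re z)^2 + (Im z)^2"
    using m1 mult_right_mono[OF m1(1), of "(Im z)^2"] by simp
  also have "\<dots> = norm z ^ 2" by (simp add: cmod_power2)
  finally have a: "m * (1 + (Im z)^2) \<le> norm z ^ 2" .
  have p: "0 < m * (1 + (Im z)^2)" using m0 by (simp add: add_pos_nonneg)
  have b: "(m * (1 + (Im z)^2))^3 \<le> norm z ^ 6"
    using power_mono[OF a, of 3] p by (simp add: power_mult[symmetric])
  have "norm (Gamma z) * (m * (1 + (Im z)^2))^3 \<le> norm (Gamma z) * norm z ^ 6"
    using b by (intro mult_left_mono) auto
  also have "\<dots> \<le> Gamma (Re z + 6)" using norm_Gamma_poly[OF z, of 6] by simp
  finally have "norm (Gamma z) \<le> Gamma (Re z + 6) / (m * (1 + (Im z)^2))^3"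
    using p by (simp add: field_simps)
  thus ?thesis by (simp add: m_def power_mult_distrib divide_divide_eq_left)
qed

lemma contour21: "meijer_contour 2 1 [1] [k, m, 0] = min k m / 2"
  by (simp add: meijer_contour_def lessThan_Suc numeral_2_eq_2 min_def)

lemma contour22: "meijer_contour 2 2 [0, 1] [k, m, 0, 2] = min k m / 2"
  by (simp add: meijer_contour_def lessThan_Suc numeral_2_eq_2 min_def max_def)

lemma integrand21: "meijer_integrand 2 1 [1] [k, m, 0] z s =
   Gamma (of_real k - s) * Gamma (of_real m - s) * (Gamma s * rGamma (s + 1)) * of_real z powr s"
  by (simp add: meijer_integrand_def lessThan_Suc numeral_2_eq_2 numeral_3_eq_3 atLeastLessThanSuc add.commute mult_ac)

lemma integrand22: "meijer_integrand 2 2 [0, 1] [k, m, 0, 2] z s =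
   Gamma (of_real k - s) * Gamma (of_real m - s) * (Gamma (s + 1) * Gamma s * rGamma (s + 1) * rGamma (s - 1)) * of_real z powr s"
  by (simp add: meijer_integrand_def lessThan_Suc numeral_2_eq_2 numeral_3_eq_3 eval_nat_numeral atLeastLessThanSuc add.commute mult_ac)

lemma gamma_density_nonneg: "k > 0 \<Longrightarrow> gamma_density k x \<ge> 0"
  by (simp add: gamma_density_def)

lemma gamma_density_meas[measurable]: "gamma_density k \<in> borel_measurable borel"
  unfolding gamma_density_def by measurable

lemma gamma_density_pow_eq:
  fixes k x :: real and p :: nat assumes k: "k > 0"
  shows "gamma_density k x * x ^ p =
    k / (Gamma k * k ^ p) * (indicator {0..} (k * x) * (k * x) powr (k + real p - 1) / exp (k * x))"
proof (cases "x > 0")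
  case True
  have kx: "(k * x) powr (k + real p - 1) = k powr k * k ^ p / k * (x powr (k - 1) * x ^ p)"
    using True k
    by (simp add: powr_mult powr_add powr_diff powr_realpow field_simps)
  show ?thesis using True k
    by (simp add: gamma_density_def kx exp_minus field_simps)
next
  case False
  thus ?thesis using k
    by (auto simp: gamma_density_def indicator_def zero_le_mult_iff)
qed

lemma gamma_moment_nn:
  fixes k :: real and p :: nat assumes k: "k > 0"
  shows "(\<integral>\<^sup>+x. ennreal (gamma_density k x * x ^ p) \<partial>lborel) = ennreal (Gamma (k + p) / (Gamma k * k ^ p))"
proof -
  define h where "h t = indicator {0..} t * t powr (k + real p - 1) / exp t" for t :: real
  have h0: "h t \<ge> 0" for t by (simp add: h_def)
  have hm[measurable]: "h \<in> borel_measurable borel" unfolding h_def by measurable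
  have G: "Gamma (k + p) = (\<integral>\<^sup>+t. ennreal (h t) \<partial>lborel)"
    using Gamma_conv_nn_integral_real[of "k + p"] k unfolding h_def by simp
  have "(\<integral>\<^sup>+t. ennreal (h t) \<partial>lborel) = ennreal k * (\<integral>\<^sup>+x. ennreal (h (0 + k * x)) \<partial>lborel)"
    using nn_integral_real_affine[of "\<lambda>t. ennreal (h t)" k 0] k by simp
  note aff = this
  have I: "(\<integral>\<^sup>+x. ennreal (h (k * x)) \<partial>lborel) = ennreal (Gamma (k + p) / k)"
  proof -
    define Y where "Y = (\<integral>\<^sup>+x. ennreal (h (k * x)) \<partial>lborel)"
    have a: "(\<integral>\<^sup>+t. ennreal (h t) \<partial>lborel) = ennreal k * Y" using aff unfolding Y_def by simp
    have "ennreal (Gamma (k + p) / k) = ennreal (Gamma (k + p)) * ennreal (1 / k)"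
      using k by (simp add: ennreal_mult'[symmetric])
    also have "\<dots> = Y * (ennreal k * ennreal (1 / k))" unfolding G a by (simp add: mult_ac)
    also have "ennreal k * ennreal (1 / k) = 1" using k by (simp add: ennreal_mult'[symmetric])
    finally show ?thesis unfolding Y_def by simp
  qed
  have "(\<integral>\<^sup>+x. ennreal (gamma_density k x * x ^ p) \<partial>lborel)
        = (\<integral>\<^sup>+x. ennreal (k / (Gamma k * k ^ p)) * ennreal (h (k * x)) \<partial>lborel)"
    using k by (intro nn_integral_cong) (simp add: gamma_density_pow_eq h_def ennreal_mult'[symmetric] h0)
  also have "\<dots> = ennreal (k / (Gamma k * k ^ p)) * (\<integral>\<^sup>+x. ennreal (h (k * x)) \<partial>lborel)"
    by (rule nn_integral_cmult) measurable
  also have "\<dots> = ennreal (Gamma (k + p) / (Gamma k * k ^ p))"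
    unfolding I using k by (simp add: ennreal_mult'[symmetric] field_simps)
  finally show ?thesis .
qed

lemma gamma_moment:
  fixes k :: real and p :: nat assumes k: "k > 0"
  shows "integrable lborel (\<lambda>x. gamma_density k x * x ^ p)"
    and "(LINT x|lborel. gamma_density k x * x ^ p) = Gamma (k + p) / (Gamma k * k ^ p)"
proof -
  have nn: "AE x in lborel. 0 \<le> gamma_density k x * x ^ p"
    using k by (intro AE_I2) (auto simp: gamma_density_def)
  show "integrable lborel (\<lambda>x. gamma_density k x * x ^ p)"
    using nn by (intro integrableI_nonneg) (auto simp: gamma_moment_nn[OF k])
  have "0 \<le> Gamma (k + p) / (Gamma k * k ^ p)" using k by simp
  thus "(LINT x|lborel. gamma_density k x * x ^ p) = Gamma (k + p) / (Gamma k * k ^ p)"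
    using nn by (subst integral_eq_nn_integral) (auto simp: gamma_moment_nn[OF k])
qed

lemma Gamma_real_plus1: "(k::real) > 0 \<Longrightarrow> Gamma (k + 1) = k * Gamma k"
  by (rule Gamma_plus1) (auto elim!: nonpos_Ints_cases)

lemma aux_k: "(G::real) \<noteq> 0 \<Longrightarrow> k \<noteq> 0 \<Longrightarrow> (k + 1) * (k * G) / (G * k^2) = (k+1)/k"
  by (simp add: power2_eq_square field_simps)

lemma (in prob_space) gamma_rv_moments:
  assumes k: "k > 0" and d: "distributed M lborel X (\<lambda>x. ennreal (gamma_density k x))"
  shows "integrable M X" "expectation X = 1"
    "integrable M (\<lambda>\<omega>. (X \<omega>)^2)" "expectation (\<lambda>\<omega>. (X \<omega>)^2) = (k + 1) / k"
proof -
  have nn: "\<And>x. x \<in> space lborel \<Longrightarrow> 0 \<le> gamma_density k x" using k by (simp add: gamma_density_def)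
  have I: "integrable M (\<lambda>\<omega>. X \<omega> ^ p)" for p :: nat
    using gamma_moment(1)[OF k, of p] distributed_integrable[OF d, of "\<lambda>x. x ^ p", OF _ nn] by simp
  have E: "expectation (\<lambda>\<omega>. X \<omega> ^ p) = Gamma (k + p) / (Gamma k * k ^ p)" for p :: nat
    using gamma_moment(2)[OF k, of p] distributed_integral[OF d, of "\<lambda>x. x ^ p", OF _ nn] by simp
  show "integrable M X" using I[of 1] by simp
  show "integrable M (\<lambda>\<omega>. (X \<omega>)^2)" using I[of 2] by simp
  have g0: "Gamma k \<noteq> 0" using k Gamma_real_pos[of k] by linarith
  show "expectation X = 1" using E[of 1] g0 k by (simp add: Gamma_real_plus1)
  have "Gamma (k + 2) = (k + 1) * (k * Gamma k)"
    using Gamma_real_plus1[of "k+1"] Gamma_real_plus1[of k] k by (simp add: add.assoc)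
  note Gk2 = this
  have "expectation (\<lambda>\<omega>. (X \<omega>)^2) = Gamma (k + 2) / (Gamma k * k^2)" using E[of 2] by simp
  also have "\<dots> = (k + 1) / k" unfolding Gk2 by (rule aux_k) (use g0 k in auto)
  finally show "expectation (\<lambda>\<omega>. (X \<omega>)^2) = (k + 1) / k" .
qed

lemma variance_genK:
  fixes M :: "'s measure" and X Y :: "'s \<Rightarrow> real" and ke me ge :: real
  assumes ke: "ke > 0" and me: "me > 0" and P: "prob_space M"
    and dX: "distributed M lborel X (\<lambda>x. ennreal (gamma_density ke x))"
    and dY: "distributed M lborel Y (\<lambda>x. ennreal (gamma_density me x))"
    and ind: "prob_space.indep_var M borel X borel Y"
  shows "prob_space.variance M (\<lambda>\<omega>. ge * X \<omega> * Y \<omega>) = ge^2 * ((ke + 1) * (me + 1) / (ke * me) - 1)"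
proof -
  interpret prob_space M by (rule P)
  note mX = gamma_rv_moments[OF ke dX]
  note mY = gamma_rv_moments[OF me dY]
  have iXY: "integrable M (\<lambda>\<omega>. X \<omega> * Y \<omega>)" and eXY: "expectation (\<lambda>\<omega>. X \<omega> * Y \<omega>) = 1"
    using indep_var_integrable[OF ind mX(1) mY(1)] indep_var_lebesgue_integral[OF ind mX(1) mY(1)] mX(2) mY(2)
    by auto
  have ind2: "indep_var borel (\<lambda>\<omega>. (X \<omega>)^2) borel (\<lambda>\<omega>. (Y \<omega>)^2)"
    using indep_var_compose[OF ind, of "\<lambda>x. x^2" borel "\<lambda>x. x^2" borel] by (simp add: o_def)
  have iXY2: "integrable M (\<lambda>\<omega>. (X \<omega>)^2 * (Y \<omega>)^2)"
    and eXY2: "expectation (\<lambda>\<omega>. (X \<omega>)^2 * (Y \<omega>)^2) = (ke + 1) / ke * ((me + 1) / me)"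
    using indep_var_integrable[OF ind2 mX(3) mY(3)] indep_var_lebesgue_integral[OF ind2 mX(3) mY(3)] mX(4) mY(4)
    by auto
  have i1: "integrable M (\<lambda>\<omega>. ge * X \<omega> * Y \<omega>)"
    using integrable_mult_right[OF iXY, of ge] by (simp add: mult_ac)
  have i2: "integrable M (\<lambda>\<omega>. (ge * X \<omega> * Y \<omega>)^2)"
    using integrable_mult_right[OF iXY2, of "ge^2"] by (simp add: power_mult_distrib mult_ac)
  have e1: "expectation (\<lambda>\<omega>. ge * X \<omega> * Y \<omega>) = ge"
    using eXY by (simp add: mult.assoc)
  have e2: "expectation (\<lambda>\<omega>. (ge * X \<omega> * Y \<omega>)^2) = ge^2 * ((ke + 1) / ke * ((me + 1) / me))"
    using eXY2 by (simp add: power_mult_distrib mult.assoc)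
  have v: "variance (\<lambda>\<omega>. ge * X \<omega> * Y \<omega>) = expectation (\<lambda>\<omega>. (ge * X \<omega> * Y \<omega>)^2) - (expectation (\<lambda>\<omega>. ge * X \<omega> * Y \<omega>))^2"
    by (rule variance_eq[OF i1 i2])
  have "variance (\<lambda>\<omega>. ge * X \<omega> * Y \<omega>) = ge^2 * ((ke + 1) / ke * ((me + 1) / me)) - ge^2"
    using v unfolding e1 e2 by simp
  thus ?thesis using ke me by (simp add: field_simps)
qed

lemma Gamma_rGamma_1: "Re (z::complex) > 0 \<Longrightarrow> Gamma z * rGamma z = 1"
  using Gamma_nonzero[OF Re_pos_not_nonpos_Int] by (simp add: rGamma_inverse_Gamma)

lemma Gamma_rGamma_succ: "Re (z::complex) > 0 \<Longrightarrow> Gamma z * rGamma (z + 1) = 1 / z"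
proof -
  assume z: "Re z > 0"
  hence "z \<noteq> 0" by auto
  have "z * rGamma (z + 1) = rGamma z" by (rule rGamma_plus1)
  hence "rGamma (z + 1) = rGamma z / z" using \<open>z \<noteq> 0\<close> by (simp add: field_simps)
  thus ?thesis using Gamma_rGamma_1[OF z] by simp
qed

lemma norm_inv_Complex: "c > 0 \<Longrightarrow> norm (1 / Complex c t) \<le> 1 / c"
proof -
  assume c: "c > 0"
  have "c \<le> norm (Complex c t)" using complex_Re_le_cmod[of "Complex c t"] by simp
  thus ?thesis using c by (simp add: norm_divide divide_simps)
qed

definition g0 :: "real \<Rightarrow> real \<Rightarrow> real \<Rightarrow> real \<Rightarrow> complex" where
  "g0 k m c t = Gamma (of_real k - Complex c t) * Gamma (of_real m - Complex c t) *
      (Gamma (Complex c t) * rGamma (Complex c t + 1))"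

lemma g0_cont:
  assumes "0 < c" "c < k" "c < m"
  shows "continuous_on UNIV (g0 k m c)"
proof (rule continuous_at_imp_continuous_on, intro ballI)
  fix t :: real
  have n1: "of_real k - Complex c t \<notin> \<int>\<^sub>\<le>\<^sub>0" using assms by (intro Re_pos_not_nonpos_Int) simp
  have n2: "of_real m - Complex c t \<notin> \<int>\<^sub>\<le>\<^sub>0" using assms by (intro Re_pos_not_nonpos_Int) simp
  have n3: "Complex c t \<notin> \<int>\<^sub>\<le>\<^sub>0" using assms by (intro Re_pos_not_nonpos_Int) simp
  have ct: "isCont (\<lambda>t. Complex c t) t"
    using cont_Complex[of c] by (simp add: continuous_on_eq_continuous_at)
  show "isCont (g0 k m c) t" unfolding g0_def
    by (intro continuous_intros ct n1 n2 n3)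
qed

lemma g0_bound:
  assumes c: "0 < c" "c < k" "c < m"
  shows "norm (g0 k m c t) \<le> (Gamma (k - c) * (Gamma (m - c + 6) / (min ((m - c)^2) 1)^3) * (1 / c)) / (1 + t^2)^3"
proof -
  have a: "norm (Gamma (of_real k - Complex c t)) \<le> Gamma (k - c)"
    using norm_Gamma_le[of "of_real k - Complex c t"] c by simp
  have b: "norm (Gamma (of_real m - Complex c t)) \<le> Gamma (m - c + 6) / (min ((m - c)^2) 1)^3 / (1 + t^2)^3"
    using Gamma_decay[of "of_real m - Complex c t"] c by simp
  have d: "norm (Gamma (Complex c t) * rGamma (Complex c t + 1)) \<le> 1 / c"
    using Gamma_rGamma_succ[of "Complex c t"] norm_inv_Complex[of c t] c by simp
  hence d': "norm (Gamma (Complex c t)) * norm (rGamma (Complex c t + 1)) \<le> 1 / c"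
    by (simp add: norm_mult)
  have p1: "0 \<le> Gamma (k - c)" using c Gamma_real_pos[of "k - c"] by simp
  have p2: "0 \<le> Gamma (m - c + 6) / (min ((m - c)^2) 1)^3 / (1 + t^2)^3"
    using c Gamma_real_pos[of "m - c + 6"] by (intro divide_nonneg_nonneg) auto
  have "norm (g0 k m c t) \<le> Gamma (k - c) * (Gamma (m - c + 6) / (min ((m - c)^2) 1)^3 / (1 + t^2)^3) * (1 / c)"
    unfolding g0_def norm_mult
    by (intro mult_mono a b d' mult_nonneg_nonneg p1 p2) auto
  thus ?thesis by (simp add: field_simps)
qed

lemma powr_minus2:
  assumes X: "X > 0"
  shows "complex_of_real X powr Complex (c - 1 - 1) t = complex_of_real X powr Complex c t / complex_of_real (X^2)"
proof -
  have e: "Complex (c - 1 - 1) t = Complex c t - 2" by (simp add: complex_eq_iff)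
  define L where "L = complex_of_real (ln X)"
  have x2: "exp (2 * ln X) = X^2"
    using exp_of_nat_mult[of 2 "ln X"] X by simp
  have "2 * L = complex_of_real (2 * ln X)" by (simp add: L_def)
  hence e2: "exp (2 * L) = complex_of_real (X^2)"
    by (simp only: exp_of_real x2)
  have "complex_of_real X powr Complex (c - 1 - 1) t = exp ((Complex c t - 2) * L)"
    unfolding powr_pos_exp[OF X] e L_def ..
  also have "(Complex c t - 2) * L = Complex c t * L - 2 * L" by (rule left_diff_distrib)
  also have "exp (Complex c t * L - 2 * L) = exp (Complex c t * L) / exp (2 * L)" by (rule exp_diff)
  also have "exp (Complex c t * L) = complex_of_real X powr Complex c t"
    unfolding powr_pos_exp[OF X] L_def ..
  finally show ?thesis unfolding e2 .
qed

lemma alg_gamma: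
  fixes Ga Gb Gs G1 r1 rm s P Q :: complex
  assumes h1: "Gs * r1 * s = 1" and h2: "G1 * r1 = 1" and h3: "Gs * rm = s - 1"
  shows "Ga * Gb * (Gs * r1) * s * (s - 1) * (P / Q) = Ga * Gb * (G1 * Gs * r1 * rm) * P / Q"
proof -
  have "Ga * Gb * (Gs * r1) * s * (s - 1) * (P / Q) = Ga * Gb * (Gs * r1 * s) * (s - 1) * P / Q"
    by (simp add: mult_ac)
  also have "\<dots> = Ga * Gb * (s - 1) * P / Q" using h1 by simp
  also have "\<dots> = Ga * Gb * ((G1 * r1) * (Gs * rm)) * P / Q" using h2 h3 by simp
  also have "\<dots> = Ga * Gb * (G1 * Gs * r1 * rm) * P / Q" by (simp add: mult_ac)
  finally show ?thesis .
qed

lemma integrand_eq22: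
  assumes c: "0 < c" and X: "X > 0"
  shows "g0 kd md c t * Complex c t * Complex (c - 1) t * complex_of_real X powr Complex (c - 1 - 1) t =
         meijer_integrand 2 2 [0, 1] [kd, md, 0, 2] X (Complex c t) / complex_of_real (X^2)"
proof -
  define s where "s = Complex c t"
  have sR: "Re s > 0" using c by (simp add: s_def)
  have s0: "s \<noteq> 0" using sR by auto
  have h1: "Gamma s * rGamma (s + 1) * s = 1" using Gamma_rGamma_succ[OF sR] s0 by simp
  have h2: "Gamma (s + 1) * rGamma (s + 1) = 1" using sR by (intro Gamma_rGamma_1) simp
  have "(s - 1) * rGamma (s - 1 + 1) = rGamma (s - 1)" by (rule rGamma_plus1)
  hence "rGamma (s - 1) = (s - 1) * rGamma s" by simp
  hence h3: "Gamma s * rGamma (s - 1) = s - 1" using Gamma_rGamma_1[OF sR] by (simp add: mult_ac)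
  have cm: "Complex (c - 1) t = s - 1" by (simp add: s_def complex_eq_iff)
  show ?thesis
    unfolding g0_def integrand22 powr_minus2[OF X] cm s_def[symmetric]
    by (rule alg_gamma[OF h1 h2 h3])
qed

lemma aux_div_mono: "(B::real) \<ge> 0 \<Longrightarrow> B / (1 + t^2)^3 \<le> B / (1 + t^2)^2"
proof -
  assume B: "B \<ge> 0"
  have p: "0 < 1 + t^2" by (simp add: add_pos_nonneg)
  have "(1 + t^2)^2 * 1 \<le> (1 + t^2)^2 * (1 + t^2)" using p by (intro mult_left_mono) auto
  hence "(1 + t^2)^2 \<le> (1 + t^2)^3" by (simp add: power3_eq_cube power2_eq_square mult_ac)
  thus ?thesis using B p by (intro divide_left_mono) auto
qed

lemma aux_frac3: "(a::real) > 0 \<Longrightarrow> B / a^3 * (C * a) = B * C / a^2"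
  by (simp add: power3_eq_cube power2_eq_square field_simps)

lemma fin_alg:
  fixes K z G1 G2 q R ge lam :: real
  assumes "K \<noteq> 0" "z \<noteq> 0" "G1 \<noteq> 0" "G2 \<noteq> 0"
  shows "ge^2 * q / 2 * (R / (K * z)^2 * (K * lam) * (K * lam) / (2 * pi) / (G1 * G2)) =
         ge^2 * lam^2 * (q * (R / (2 * pi))) / (2 * G1 * G2 * z^2)"
  using assms by (simp add: field_simps power2_eq_square)

theorem theorem1:
  fixes M :: "'s measure" and X Y :: "'s \<Rightarrow> real"
    and Rs lam kd md gd ke me ge sigma2 :: real
  assumes "Rs > 0" and "lam = 2 powr Rs"
    and "kd > 0" and "md > 0" and "gd > 0"
    and "ke > 0" and "me > 0" and "ge > 0"
    and "prob_space M"
    and "distributed M lborel X (\<lambda>x. ennreal (gamma_density ke x))"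
    and "distributed M lborel Y (\<lambda>x. ennreal (gamma_density me x))"
    and "prob_space.indep_var M borel X borel Y"
    and "sigma2 = prob_space.variance M (\<lambda>\<omega>. ge * X \<omega> * Y \<omega>)"
  shows "(let P = (\<lambda>x. genK_cdf kd md gd (lam - 1 + lam * x))
          in P ge + sigma2 / 2 * deriv (deriv P) ge) =
     meijerG 2 1 [1] [kd, md, 0] (kd * md * (lam - 1 + lam * ge) / gd) / (Gamma kd * Gamma md)
     + ge\<^sup>2 * lam\<^sup>2 *
       (((ke + 1) * (me + 1) / (ke * me) - 1) *
         meijerG 2 2 [0, 1] [kd, md, 0, 2] (kd * md * (lam - 1 + lam * ge) / gd))
       / (2 * Gamma kd * Gamma md * (lam - 1 + lam * ge)\<^sup>2)"
proof -
  note a = assms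
  have sig: "sigma2 = ge^2 * ((ke + 1) * (me + 1) / (ke * me) - 1)"
    unfolding a(13) by (rule variance_genK[OF a(6) a(7) a(9) a(10) a(11) a(12)])
  have lam1: "lam > 1"
    using powr_less_mono[of 0 Rs 2] a(1) unfolding a(2) by simp
  define c where "c = min kd md / 2"
  have c: "0 < c" "c < kd" "c < md" using a(3,4) by (auto simp: c_def)
  define B0 where "B0 = Gamma (kd - c) * (Gamma (md - c + 6) / (min ((md - c)^2) 1)^3) * (1 / c)"
  have gb0: "norm (g0 kd md c t) \<le> B0 / (1 + t^2)^3" for t
    unfolding B0_def by (rule g0_bound[OF c])
  have B0: "B0 \<ge> 0" using order_trans[OF norm_ge_zero gb0[of 0]] by simp
  have gb0': "norm (g0 kd md c t) \<le> B0 / (1 + t^2)^2" for t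
    using gb0[of t] aux_div_mono[OF B0, of t] by linarith
  have gb1: "norm (g0 kd md c t * Complex c t) \<le> (B0 * (\<bar>c\<bar> + 1)) / (1 + t^2)^2" for t
  proof -
    have p: "0 < 1 + t^2" by (simp add: add_pos_nonneg)
    have "norm (g0 kd md c t * Complex c t) = norm (g0 kd md c t) * norm (Complex c t)"
      by (simp add: norm_mult)
    also have "\<dots> \<le> B0 / (1 + t^2)^3 * ((\<bar>c\<bar> + 1) * (1 + t^2))"
      using gb0[of t] norm_Complex_le[of c t] B0 p by (intro mult_mono) auto
    also have "\<dots> = (B0 * (\<bar>c\<bar> + 1)) / (1 + t^2)^2" using aux_frac3[OF p] by simp
    finally show ?thesis .
  qed
  have gc0: "continuous_on UNIV (\<lambda>t. g0 kd md c t)" using g0_cont[OF c] by simp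
  have gc1: "continuous_on UNIV (\<lambda>t. g0 kd md c t * Complex c t)"
    by (intro continuous_intros gc0 cont_Complex)
  define \<Phi>0 where "\<Phi>0 = (\<lambda>y. Re (LINT t|lborel. g0 kd md c t * of_real y powr Complex c t))"
  define \<Phi>1 where "\<Phi>1 = (\<lambda>y. Re (LINT t|lborel. g0 kd md c t * Complex c t * of_real y powr Complex (c - 1) t))"
  define \<Phi>2 where "\<Phi>2 = (\<lambda>y. Re (LINT t|lborel. g0 kd md c t * Complex c t * Complex (c - 1) t * of_real y powr Complex (c - 1 - 1) t))"
  have D0: "(\<Phi>0 has_real_derivative \<Phi>1 y) (at y)" if "y > 0" for y
    unfolding \<Phi>0_def \<Phi>1_def by (rule deriv_mellin[OF gc0 gb0' that])
  have D1: "(\<Phi>1 has_real_derivative \<Phi>2 y) (at y)" if "y > 0" for y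
    unfolding \<Phi>1_def \<Phi>2_def by (rule deriv_mellin[OF gc1 gb1 that])
  define GG where "GG = Gamma kd * Gamma md"
  have GG: "GG > 0" using a(3,4) by (simp add: GG_def)
  define A where "A = (\<lambda>y. kd * md * (lam - 1 + lam * y) / gd)"
  define da where "da = kd * md * lam / gd"
  have dA: "(A has_real_derivative da) (at y)" for y
    unfolding A_def da_def using a(5) by (auto intro!: derivative_eq_intros simp: field_simps)
  define P where "P = (\<lambda>x. genK_cdf kd md gd (lam - 1 + lam * x))"
  have Peq: "P = (\<lambda>y. \<Phi>0 (A y) / (2 * pi) / GG)"
  proof
    fix y
    show "P y = \<Phi>0 (A y) / (2 * pi) / GG"
      unfolding P_def genK_cdf_def meijerG_def contour21 integrand21 c_def[symmetric] \<Phi>0_def A_def GG_def g0_def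
      by simp
  qed
  define U where "U = {y. A y > 0}"
  have openU: "open U" unfolding U_def A_def
    using a(5) by (intro open_Collect_less continuous_intros) auto
  have geU: "ge \<in> U" unfolding U_def A_def using a(3,4,5,8) lam1
    by (intro CollectI divide_pos_pos mult_pos_pos) (auto intro: add_pos_pos)
  define P1 where "P1 = (\<lambda>y. \<Phi>1 (A y) * da / (2 * pi) / GG)"
  have dP: "(P has_real_derivative P1 y) (at y)" if "y \<in> U" for y
  proof -
    have "((\<lambda>y. \<Phi>0 (A y)) has_real_derivative \<Phi>1 (A y) * da) (at y)"
      using D0[of "A y"] that dA[of y] unfolding U_def by (auto intro: DERIV_chain2)
    thus ?thesis unfolding Peq P1_def by (intro DERIV_cdivide)
  qed
  have ev: "\<forall>\<^sub>F y in nhds ge. deriv P y = P1 y"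
    using eventually_nhds_in_open[OF openU geU]
    by eventually_elim (rule DERIV_imp_deriv[OF dP])
  have "((\<lambda>y. \<Phi>1 (A y)) has_real_derivative \<Phi>2 (A ge) * da) (at ge)"
    using D1[of "A ge"] geU dA[of ge] unfolding U_def by (auto intro: DERIV_chain2)
  hence "(P1 has_real_derivative \<Phi>2 (A ge) * da * da / (2 * pi) / GG) (at ge)"
    unfolding P1_def by (intro DERIV_cdivide DERIV_cmult_right)
  hence "(deriv P has_real_derivative \<Phi>2 (A ge) * da * da / (2 * pi) / GG) (at ge)"
    using DERIV_cong_ev[OF refl ev refl] by simp
  hence dd: "deriv (deriv P) ge = \<Phi>2 (A ge) * da * da / (2 * pi) / GG"
    by (rule DERIV_imp_deriv)
  define XX where "XX = A ge"
  have XX: "XX > 0" using geU unfolding U_def XX_def by simp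
  define I22 where "I22 = (LINT t|lborel. meijer_integrand 2 2 [0, 1] [kd, md, 0, 2] XX (Complex c t))"
  have phi2: "\<Phi>2 XX = Re I22 / XX^2"
  proof -
    have "\<Phi>2 XX = Re (LINT t|lborel. meijer_integrand 2 2 [0, 1] [kd, md, 0, 2] XX (Complex c t) / complex_of_real (XX^2))"
      unfolding \<Phi>2_def using integrand_eq22[OF c(1) XX] by simp
    also have "\<dots> = Re (I22 / complex_of_real (XX^2))" unfolding I22_def by simp
    finally show ?thesis by simp
  qed
  have g22: "meijerG 2 2 [0, 1] [kd, md, 0, 2] XX = Re I22 / (2 * pi)"
    unfolding meijerG_def contour22 c_def[symmetric] I22_def by simp
  have P0: "P ge = meijerG 2 1 [1] [kd, md, 0] (kd * md * (lam - 1 + lam * ge) / gd) / (Gamma kd * Gamma md)"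
    unfolding P_def genK_cdf_def ..
  have z0: "lam - 1 + lam * ge > 0" using lam1 a(8) by (simp add: add_pos_pos)
  have XXe: "XX = kd * md / gd * (lam - 1 + lam * ge)" unfolding XX_def A_def by simp
  have dae: "da = kd * md / gd * lam" unfolding da_def by simp
  have K: "kd * md / gd > 0" using a(3,4,5) by simp
  have fin: "sigma2 / 2 * deriv (deriv P) ge =
     ge\<^sup>2 * lam\<^sup>2 * (((ke + 1) * (me + 1) / (ke * me) - 1) * meijerG 2 2 [0, 1] [kd, md, 0, 2] XX)
       / (2 * Gamma kd * Gamma md * (lam - 1 + lam * ge)\<^sup>2)"
    unfolding dd XX_def[symmetric] phi2 g22 sig
    unfolding XXe dae GG_def
    by (rule fin_alg) (use z0 K Gamma_real_pos[OF a(3)] Gamma_real_pos[OF a(4)] in auto)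
  show ?thesis
    unfolding Let_def P_def[symmetric] P0 fin XX_def A_def by simp
qed

end
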